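(* Under the setting and quadratic assumption described in the context, the replacement of an agent, denoted $R$, results in $$\mathbb{E}\left[\Delta f_t \mid R\right] \leq \frac{3n^2-3n+1}{2n^2}\left(\beta-\alpha\right).$$
   Context: A fixed set of $n$ agents on a complete graph solves $\min_{x\in S_n} f^t(x)=\sum_{i=1}^n f_i^t(x_i)$, where $S_n=\{x\in\mathbb{R}_{\ge 0}^n : \mathds{1}^\top x = n\}$ (every agent has demand $d_i^t=1$). Each local cost $f_i^t:\mathbb{R}_{\ge0}\to\mathbb{R}_{\ge0}$ is one-dimensional, continuously differentiable, $\alpha$-strongly convex, $\beta$-smooth, with $\arg\min_{x\ge 0} f_i^t(x)=0$ and $f_i^t(0)=0$; moreover every local cost (including that of any joining agent) is quadratic, $f_i(x_i)=\phi_i x_i^2$ with $\phi_i\in[\alpha/2,\beta/2]$. The estimates $x^t\in S_n$ evolve by events: either an update (a pairwise Random Coordinate Descent step between agents $i,j$: $x_i^+=x_i-\frac1\beta(f_i'(x_i)-f_j'(x_j))$, $x_j^+=x_j-\frac1\beta(f_j'(x_j)-f_i'(x_i))$) or a replacement $R$, i.e. simultaneous departure and arrival. At a departure, a leaving agent $\ell$ chosen uniformly among the $n$ agents sends its estimate $x_\ell$ to all others, which update $x_i^+=(1-\frac1n)x_i+\frac1n x_\ell$; at an arrival, the joining agent initializes its estimate to $1$. Here $\Delta f_t := f^{t+1}(x^{t+1})-f^t(x^t)$ is the one-step variation of the total cost evaluated at the estimates. *)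

theory Defs
  imports Complex_Main
begin

text \<open>Agents are indexed by 0..n-1. Local costs are quadratic: f_i(y) = phi i * y^2.\<close>

definition total_cost :: "nat \<Rightarrow> (nat \<Rightarrow> real) \<Rightarrow> (nat \<Rightarrow> real) \<Rightarrow> real" where
  "total_cost n phi x = (\<Sum>i<n. phi i * (x i)^2)"

definition in_simplex :: "nat \<Rightarrow> (nat \<Rightarrow> real) \<Rightarrow> bool" where
  "in_simplex n x \<longleftrightarrow> (\<forall>i<n. x i \<ge> 0) \<and> (\<Sum>i<n. x i) = real n"

text \<open>Replacement with leaving agent l: the others average with x l, and the
 joining agent (placed in slot l) starts with estimate 1 and cost coefficient psi.\<close>

definition repl_state :: "nat \<Rightarrow> (nat \<Rightarrow> real) \<Rightarrow> nat \<Rightarrow> nat \<Rightarrow> real" where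
  "repl_state n x l = (\<lambda>i. if i = l then 1 else (1 - 1 / real n) * x i + x l / real n)"

definition repl_costs :: "(nat \<Rightarrow> real) \<Rightarrow> nat \<Rightarrow> real \<Rightarrow> nat \<Rightarrow> real" where
  "repl_costs phi l psi = phi(l := psi)"

text \<open>Expected one-step cost variation given a replacement; the leaving agent is
 uniform over the n agents, the joiner's coefficient psi l may depend on l.\<close>

definition expected_delta_repl ::
  "nat \<Rightarrow> (nat \<Rightarrow> real) \<Rightarrow> (nat \<Rightarrow> real) \<Rightarrow> (nat \<Rightarrow> real) \<Rightarrow> real" where
  "expected_delta_repl n phi psi x =
     (\<Sum>l<n. (1 / real n) *
        (total_cost n (repl_costs phi l (psi l)) (repl_state n x l) - total_cost n phi x))"

end

theory Submission imports Defs begin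
lemma pair1:
  fixes u v m :: real assumes "m \<ge> 1" "0 \<le> v" "v \<le> u"
  shows "((1 - 1/m)*v + u/m)^2 - v^2 \<le> (u^2+v^2+(2*m-2)*u*v)/m^2"
proof -
  have e: "((1 - 1/m)*v + u/m)^2 - v^2 = (u - v)*((2*m-1)*v + u)/m^2"
    using assms by (simp add: field_simps power2_eq_square)
  have "(u - v)*((2*m-1)*v + u) \<le> u^2+v^2+(2*m-2)*u*v"
    using assms by (simp add: algebra_simps power2_eq_square)
  then show ?thesis unfolding e using assms by (simp add: divide_right_mono)
qed
lemma pair2:
  fixes u v m :: real assumes "m \<ge> 1" "0 \<le> v" "v \<le> u"
  shows "((1 - 1/m)*u + v/m)^2 - u^2 \<le> 0"
proof -
  have "(1 - 1/m)*u + v/m = u - (u - v)/m" using assms by (simp add: field_simps)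
  moreover have "(u - v)/m \<ge> 0" using assms by simp
  moreover have "(u - v)/m \<le> (u - v)/1" using assms by (intro divide_left_mono) auto
  hence "(u - v)/m \<le> u - v" by simp
  ultimately have "0 \<le> (1 - 1/m)*u + v/m" "(1 - 1/m)*u + v/m \<le> u" using assms by linarith+
  then show ?thesis by (smt (verit) power_mono)
qed
lemma pairmax:
  fixes u v m :: real assumes "m \<ge> 1" "0 \<le> v" "0 \<le> u"
  shows "max 0 (((1 - 1/m)*v + u/m)^2 - v^2) + max 0 (((1 - 1/m)*u + v/m)^2 - u^2)
     \<le> (u^2+v^2+(2*m-2)*u*v)/m^2"
proof (cases "v \<le> u")
  case True
  have "0 \<le> (u^2+v^2+(2*m-2)*u*v)/m^2" using assms by simp
  then show ?thesis using pair1[OF assms(1,2) True] pair2[OF assms(1,2) True] by linarith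
next
  case False
  hence F: "u \<le> v" by simp
  have "0 \<le> (u^2+v^2+(2*m-2)*u*v)/m^2" using assms by simp
  moreover have "(v^2+u^2+(2*m-2)*v*u)/m^2 = (u^2+v^2+(2*m-2)*u*v)/m^2" by (simp add: algebra_simps)
  ultimately show ?thesis using pair1[OF assms(1,3) F] pair2[OF assms(1,3) F] by linarith
qed

theorem proposition3:
  fixes n :: nat and alpha beta :: real
    and phi psi x :: "nat \<Rightarrow> real"
  assumes "n \<ge> 1"
    and "0 < alpha" and "alpha \<le> beta"
    and "\<And>i. i < n \<Longrightarrow> alpha / 2 \<le> phi i \<and> phi i \<le> beta / 2"
    and "\<And>l. l < n \<Longrightarrow> alpha / 2 \<le> psi l \<and> psi l \<le> beta / 2"
    and "in_simplex n x"
  shows "expected_delta_repl n phi psi x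
           \<le> (3 * real n ^ 2 - 3 * real n + 1) / (2 * real n ^ 2) * (beta - alpha)"
proof -
  define m where "m = real n"
  have m1: "m \<ge> 1" using assms(1) by (simp add: m_def)
  have xpos: "\<And>i. i < n \<Longrightarrow> x i \<ge> 0" and xsum: "(\<Sum>i<n. x i) = m"
    using assms(6) by (auto simp: in_simplex_def m_def)
  define S where "S = (\<Sum>i<n. (x i)^2)"
  define d where "d l i = ((1 - 1/m) * x i + x l / m)^2 - (x i)^2" for l i
  define T where "T l = 1 - (x l)^2 + (\<Sum>i<n. d l i)" for l
  define G where "G l = 1 + (\<Sum>i<n. max 0 (d l i))" for l
  have dll: "d l l = 0" for l
  proof -
    have "(1 - 1/m) * x l + x l / m = x l" using m1 by (simp add: field_simps)
    then show ?thesis by (simp add: d_def)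
  qed
  have Sge: "S \<ge> m"
  proof -
    have "0 \<le> (\<Sum>i<n. (x i - 1)^2)" by (intro sum_nonneg) auto
    also have "\<dots> = S - 2 * (\<Sum>i<n. x i) + m"
      by (simp add: power2_eq_square algebra_simps sum.distrib sum_subtractf S_def
          sum_distrib_left m_def)
    finally show ?thesis using xsum by simp
  qed
  have delta: "total_cost n (repl_costs phi l (psi l)) (repl_state n x l) - total_cost n phi x
      \<le> alpha/2 * T l + (beta - alpha)/2 * G l" if l: "l < n" for l
  proof -
    let ?A = "{..<n} - {l}"
    have fin: "finite {..<n}" and lin: "l \<in> {..<n}" using l by auto
    have c1: "total_cost n (repl_costs phi l (psi l)) (repl_state n x l)
        = psi l + (\<Sum>i\<in>?A. phi i * ((1 - 1/m) * x i + x l / m)^2)"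
    proof -
      have "total_cost n (repl_costs phi l (psi l)) (repl_state n x l)
          = (phi(l := psi l)) l * (repl_state n x l l)^2
            + (\<Sum>i\<in>?A. (phi(l := psi l)) i * (repl_state n x l i)^2)"
        unfolding total_cost_def repl_costs_def by (rule sum.remove[OF fin lin])
      also have "(\<Sum>i\<in>?A. (phi(l := psi l)) i * (repl_state n x l i)^2)
          = (\<Sum>i\<in>?A. phi i * ((1 - 1/m) * x i + x l / m)^2)"
        by (intro sum.cong) (auto simp: repl_state_def m_def)
      finally show ?thesis by (simp add: repl_state_def)
    qed
    have c2: "total_cost n phi x = phi l * (x l)^2 + (\<Sum>i\<in>?A. phi i * (x i)^2)"
      unfolding total_cost_def by (rule sum.remove[OF fin lin])
    have diff: "total_cost n (repl_costs phi l (psi l)) (repl_state n x l) - total_cost n phi x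
        = psi l - phi l * (x l)^2 + (\<Sum>i\<in>?A. phi i * d l i)"
      unfolding c1 c2 d_def by (simp add: sum_subtractf algebra_simps)
    have s1: "(\<Sum>i<n. d l i) = (\<Sum>i\<in>?A. d l i)"
      using sum.remove[OF fin lin, of "d l"] dll by simp
    have s2: "(\<Sum>i<n. max 0 (d l i)) = (\<Sum>i\<in>?A. max 0 (d l i))"
      using sum.remove[OF fin lin, of "\<lambda>i. max 0 (d l i)"] dll by simp
    have trm: "phi i * d l i \<le> alpha/2 * d l i + (beta - alpha)/2 * max 0 (d l i)"
      if i: "i \<in> ?A" for i
    proof -
      have ph: "alpha/2 \<le> phi i" "phi i \<le> beta/2" using assms(4)[of i] i by auto
      have "(phi i - alpha/2) * d l i \<le> (phi i - alpha/2) * max 0 (d l i)"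
        using ph by (intro mult_left_mono) auto
      also have "\<dots> \<le> (beta - alpha)/2 * max 0 (d l i)"
        using ph by (intro mult_right_mono) auto
      moreover have "phi i * d l i = alpha/2 * d l i + (phi i - alpha/2) * d l i"
        by (simp add: algebra_simps)
      ultimately show ?thesis by linarith
    qed
    have "(\<Sum>i\<in>?A. phi i * d l i) \<le> (\<Sum>i\<in>?A. alpha/2 * d l i + (beta - alpha)/2 * max 0 (d l i))"
      by (intro sum_mono trm)
    also have "\<dots> = alpha/2 * (\<Sum>i<n. d l i) + (beta - alpha)/2 * (\<Sum>i<n. max 0 (d l i))"
      unfolding s1 s2 by (simp add: sum.distrib sum_distrib_left)
    finally have t1: "(\<Sum>i\<in>?A. phi i * d l i) \<le> alpha/2 * (\<Sum>i<n. d l i) + (beta - alpha)/2 * (\<Sum>i<n. max 0 (d l i))" .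
    have p1: "psi l \<le> alpha/2 + (beta - alpha)/2" using assms(5)[OF l] by (simp add: field_simps)
    have p2: "alpha/2 * (x l)^2 \<le> phi l * (x l)^2" using assms(4)[OF l] by (intro mult_right_mono) auto
    show ?thesis unfolding diff T_def G_def using t1 p1 p2 by (simp add: algebra_simps)
  qed
  have T_sum: "(\<Sum>l<n. T l) \<le> 0"
  proof -
    define a where "a = 1 - 1/m"
    have dsum: "(\<Sum>i<n. d l i) = (a^2 - 1) * S + 2 * a * x l + (x l)^2 / m" for l
    proof -
      have "(\<Sum>i<n. d l i) = (\<Sum>i<n. (a^2 - 1) * (x i)^2 + (2 * a * x l / m) * x i + (x l)^2 / m^2)"
        using m1 by (intro sum.cong) (auto simp: d_def a_def power2_eq_square field_simps)
      also have "\<dots> = (a^2 - 1) * S + (2 * a * x l / m) * (\<Sum>i<n. x i) + m * ((x l)^2 / m^2)"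
        by (simp add: sum.distrib sum_distrib_left S_def m_def)
      also have "\<dots> = (a^2 - 1) * S + 2 * a * x l + (x l)^2 / m"
        using xsum m1 by (simp add: power2_eq_square)
      finally show ?thesis .
    qed
    have "(\<Sum>l<n. T l) = (\<Sum>l<n. (1 + (a^2 - 1) * S) + 2 * a * x l + (1/m - 1) * (x l)^2)"
      by (intro sum.cong) (auto simp: T_def dsum algebra_simps)
    also have "\<dots> = m * (1 + (a^2 - 1) * S) + 2 * a * m + (1/m - 1) * S"
      by (simp add: sum.distrib sum_distrib_left[symmetric] xsum S_def m_def)
    also have "\<dots> = (3*m - 2) * (m - S) / m"
      using m1 by (simp add: a_def field_simps power2_eq_square)
    also have "\<dots> \<le> 0"
      using m1 Sge by (intro divide_nonpos_pos mult_nonneg_nonpos) auto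
    finally show ?thesis .
  qed
  have G_sum: "(\<Sum>l<n. G l) \<le> 2 * m - 1"
  proof -
    define M where "M l i = max 0 (d l i)" for l i
    define H where "H l i = ((x l)^2 + (x i)^2 + (2*m - 2) * x l * x i) / m^2
        - (if i = l then 2 * (x l)^2 / m else 0)" for l i
    have pair: "M l i + M i l \<le> H l i" if "l < n" "i < n" for l i
    proof (cases "i = l")
      case True
      have "H l i = 0" using True m1 by (simp add: H_def field_simps power2_eq_square)
      then show ?thesis using True dll by (simp add: M_def)
    next
      case False
      have "M l i + M i l \<le> ((x l)^2 + (x i)^2 + (2*m - 2) * x l * x i) / m^2"
        unfolding M_def d_def using pairmax[OF m1 xpos[OF that(2)] xpos[OF that(1)]] .
      then show ?thesis using False by (simp add: H_def)
    qed
    have "2 * (\<Sum>l<n. \<Sum>i<n. M l i) = (\<Sum>l<n. \<Sum>i<n. M l i) + (\<Sum>l<n. \<Sum>i<n. M i l)"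
      using sum.swap[of M "{..<n}" "{..<n}"] by simp
    also have "\<dots> = (\<Sum>l<n. \<Sum>i<n. M l i + M i l)" by (simp add: sum.distrib)
    also have "\<dots> \<le> (\<Sum>l<n. \<Sum>i<n. H l i)" by (intro sum_mono pair) auto
    also have "\<dots> = 2 * m - 2"
    proof -
      have "(\<Sum>i<n. H l i) = (m * (x l)^2 + S + (2*m - 2) * x l * m) / m^2 - 2 * (x l)^2 / m" if True: "l < n" for l
      proof -
        have "(\<Sum>i<n. H l i) = (\<Sum>i<n. ((x l)^2 + (x i)^2 + (2*m - 2) * x l * x i) / m^2)
            - (\<Sum>i<n. (if i = l then 2 * (x l)^2 / m else 0))"
          unfolding H_def by (simp add: sum_subtractf)
        also have "(\<Sum>i<n. (if i = l then 2 * (x l)^2 / m else 0)) = 2 * (x l)^2 / m"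
          using True by (simp add: sum.delta)
        also have "(\<Sum>i<n. ((x l)^2 + (x i)^2 + (2*m - 2) * x l * x i) / m^2)
            = (m * (x l)^2 + S + (2*m - 2) * x l * m) / m^2"
          by (simp add: sum_divide_distrib[symmetric] sum.distrib sum_distrib_left[symmetric]
              S_def m_def xsum[unfolded m_def])
        finally show ?thesis .
      qed
      then have "(\<Sum>l<n. \<Sum>i<n. H l i) = (\<Sum>l<n. (m * (x l)^2 + S + (2*m - 2) * x l * m) / m^2 - 2 * (x l)^2 / m)"
        by (intro sum.cong) auto
      also have "\<dots> = (m * S + m * S + (2*m - 2) * m * m) / m^2 - 2 * S / m"
        by (simp add: sum_subtractf sum_divide_distrib[symmetric] sum.distrib sum_distrib_left[symmetric]
              S_def m_def xsum[unfolded m_def] algebra_simps sum_distrib_right[symmetric])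
      also have "\<dots> = 2 * m - 2" using m1 by (simp add: field_simps power2_eq_square)
      finally show ?thesis .
    qed
    finally have "(\<Sum>l<n. \<Sum>i<n. M l i) \<le> m - 1" by simp
    then show ?thesis unfolding G_def M_def[symmetric] by (simp add: sum.distrib m_def)
  qed
  have "expected_delta_repl n phi psi x \<le> (\<Sum>l<n. (1/m) * (alpha/2 * T l + (beta - alpha)/2 * G l))"
    unfolding expected_delta_repl_def m_def[symmetric]
    by (intro sum_mono mult_left_mono delta) (use m1 in auto)
  also have "\<dots> = (1/m) * (\<Sum>l<n. alpha/2 * T l + (beta - alpha)/2 * G l)"
    by (rule sum_distrib_left[symmetric])
  also have "\<dots> = (1/m) * (alpha/2 * (\<Sum>l<n. T l) + (beta - alpha)/2 * (\<Sum>l<n. G l))"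
    by (simp only: sum.distrib sum_distrib_left[symmetric])
  also have "\<dots> \<le> (1/m) * (alpha/2 * 0 + (beta - alpha)/2 * (2*m - 1))"
  proof -
    have h1: "alpha/2 * (\<Sum>l<n. T l) \<le> alpha/2 * 0"
      using T_sum assms(2) by (intro mult_left_mono) auto
    have h2: "(beta - alpha)/2 * (\<Sum>l<n. G l) \<le> (beta - alpha)/2 * (2*m - 1)"
      using G_sum assms(3) by (intro mult_left_mono) auto
    have "0 \<le> 1/m" using m1 by simp
    from mult_left_mono[OF add_mono[OF h1 h2] this] show ?thesis .
  qed
  also have "\<dots> \<le> (3 * m ^ 2 - 3 * m + 1) / (2 * m ^ 2) * (beta - alpha)"
  proof -
    have "(2*m - 1) / (2*m) \<le> (3 * m ^ 2 - 3 * m + 1) / (2 * m ^ 2)"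
    proof -
      have "(3 * m ^ 2 - 3 * m + 1) / (2 * m ^ 2) - (2*m - 1) / (2*m) = (m - 1)^2 / (2 * m^2)"
        using m1 by (simp add: field_simps power2_eq_square)
      moreover have "(m - 1)^2 / (2 * m^2) \<ge> 0" by simp
      ultimately show ?thesis by linarith
    qed
    then have "(2*m - 1) / (2*m) * (beta - alpha) \<le> (3 * m ^ 2 - 3 * m + 1) / (2 * m ^ 2) * (beta - alpha)"
      using assms(3) by (intro mult_right_mono) auto
    moreover have "(1/m) * (alpha/2 * 0 + (beta - alpha)/2 * (2*m - 1)) = (2*m - 1) / (2*m) * (beta - alpha)"
      using m1 by (simp add: mult.commute)
    ultimately show ?thesis by simp
  qed
  finally show ?thesis by (simp add: m_def)
qed
end
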